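(* Let $S=\{\rho_1=0<\rho_2<\cdots\}$ be an Arf numerical semigroup with conductor $c=\rho_r$, and for a positive integer $i$ put $p_i=c+\rho_{i+1}-1$. Then $\alpha(p_i)=i$. Moreover, if $i<r$, then $\beta(p_i)=i$ and $\#A[p_i]=2i$.
   Context: A numerical semigroup is a submonoid $S$ of $(\mathbb{N}_0,+)$ with finite complement, with elements listed increasingly. $S$ is Arf if $\rho_i+\rho_j-\rho_k\in S$ for all positive integers $i\ge j\ge k$. The conductor $c$ is the smallest integer such that all integers $\ge c$ lie in $S$, with $c=\rho_r$. For $\rho\in S$: $A[\rho]=\{p\in S:\ \rho-p\in S\}$, $\alpha(\rho)=\max\{j\ge1:\ \rho_1,\dots,\rho_j\in A[\rho]\}$ and $\beta(\rho)=\max\{j\ge1:\ \rho_1,\dots,\rho_j\in A[\rho]\ \text{and}\ 2\rho_j\le\rho\}$. *)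

theory Defs
  imports "HOL-Library.Infinite_Set"
begin

definition numerical_semigroup :: "nat set \<Rightarrow> bool" where
  "numerical_semigroup S \<longleftrightarrow> 0 \<in> S \<and> (\<forall>a\<in>S. \<forall>b\<in>S. a + b \<in> S) \<and> finite (UNIV - S)"

text \<open>rho S i is the i-th element of S listed increasingly, 1-indexed (rho S 1 = 0).\<close>
definition rho :: "nat set \<Rightarrow> nat \<Rightarrow> nat" where
  "rho S i = enumerate S (i - 1)"

definition arf :: "nat set \<Rightarrow> bool" where
  "arf S \<longleftrightarrow> (\<forall>i j k. 1 \<le> k \<and> k \<le> j \<and> j \<le> i \<longrightarrow> rho S i + rho S j - rho S k \<in> S)"

definition conductor :: "nat set \<Rightarrow> nat" where
  "conductor S = (LEAST c. \<forall>n\<ge>c. n \<in> S)"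

definition Aset :: "nat set \<Rightarrow> nat \<Rightarrow> nat set" where
  "Aset S p = {q \<in> S. q \<le> p \<and> p - q \<in> S}"

definition alpha :: "nat set \<Rightarrow> nat \<Rightarrow> nat" where
  "alpha S p = (GREATEST j. 1 \<le> j \<and> (\<forall>l\<in>{1..j}. rho S l \<in> Aset S p))"

definition beta :: "nat set \<Rightarrow> nat \<Rightarrow> nat" where
  "beta S p = (GREATEST j. 1 \<le> j \<and> (\<forall>l\<in>{1..j}. rho S l \<in> Aset S p) \<and> 2 * rho S j \<le> p)"

end

theory Submission
  imports Defs
begin

lemma ns_infinite: "numerical_semigroup S \<Longrightarrow> infinite S"
  unfolding numerical_semigroup_def
  by (metis Diff_infinite_finite infinite_UNIV_nat)

lemma rho_in: "numerical_semigroup S \<Longrightarrow> rho S k \<in> S"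
  unfolding rho_def by (simp add: enumerate_in_set ns_infinite)

lemma rho_less_iff: "numerical_semigroup S \<Longrightarrow> 1 \<le> a \<Longrightarrow> 1 \<le> b \<Longrightarrow> rho S a < rho S b \<longleftrightarrow> a < b"
  unfolding rho_def using ns_infinite[of S] by auto

lemma rho_le_iff: "numerical_semigroup S \<Longrightarrow> 1 \<le> a \<Longrightarrow> 1 \<le> b \<Longrightarrow> rho S a \<le> rho S b \<longleftrightarrow> a \<le> b"
  unfolding rho_def using ns_infinite[of S] by auto

lemma rho_surj: "numerical_semigroup S \<Longrightarrow> s \<in> S \<Longrightarrow> \<exists>k\<ge>1. rho S k = s"
  unfolding rho_def using enumerate_Ex[OF ns_infinite] by (metis diff_Suc_1 le_add1 plus_1_eq_Suc)

lemma conductor_ge: assumes "numerical_semigroup S" "n \<ge> conductor S" shows "n \<in> S"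
proof -
  have "finite (UNIV - S)" using assms(1) unfolding numerical_semigroup_def by auto
  then obtain b where "\<forall>x\<in>UNIV - S. x < b"
    by (metis finite_nat_set_iff_bounded)
  then have "\<exists>c. \<forall>n\<ge>c. n \<in> S" by (meson DiffI UNIV_I leD)
  then have "\<forall>n\<ge>conductor S. n \<in> S" unfolding conductor_def by (rule LeastI_ex)
  then show ?thesis using assms(2) by auto
qed

lemma conductor_minus1: assumes "numerical_semigroup S" "conductor S \<ge> 1" shows "conductor S - 1 \<notin> S"
proof
  assume h: "conductor S - 1 \<in> S"
  have "\<forall>n\<ge>conductor S - 1. n \<in> S"
  proof (intro allI impI)
    fix n assume "n \<ge> conductor S - 1"
    then have "n = conductor S - 1 \<or> n \<ge> conductor S" by linarith
    then show "n \<in> S" using h conductor_ge[OF assms(1)] by blast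
  qed
  then have "conductor S \<le> conductor S - 1" unfolding conductor_def by (rule Least_le)
  then show False using assms(2) by linarith
qed

theorem mainTheorem7:
  fixes S :: "nat set" and r i :: nat
  assumes "numerical_semigroup S" and "arf S"
    and "1 \<le> r" and "rho S r = conductor S"
    and "1 \<le> i"
  shows "alpha S (conductor S + rho S (i + 1) - 1) = i
       \<and> (i < r \<longrightarrow> beta S (conductor S + rho S (i + 1) - 1) = i
                    \<and> card (Aset S (conductor S + rho S (i + 1) - 1)) = 2 * i)"
proof -
  note ns = assms(1)
  define c where "c = conductor S"
  define p where "p = c + rho S (i + 1) - 1"
  have ri: "rho S i < rho S (i+1)" using rho_less_iff[OF ns, of i "i+1"] assms(5) by simp
  have inA: "rho S l \<in> Aset S p" if "1 \<le> l" "l \<le> i" for l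
  proof -
    have "rho S l < rho S (i+1)" using rho_less_iff[OF ns, of l "i+1"] that by simp
    then have "p - rho S l \<ge> c" unfolding p_def by linarith
    then have "p - rho S l \<in> S" using conductor_ge[OF ns] unfolding c_def by blast
    moreover have "rho S l \<le> p" using \<open>rho S l < rho S (i+1)\<close> unfolding p_def by linarith
    ultimately show ?thesis unfolding Aset_def using rho_in[OF ns] by blast
  qed
  have notA: "rho S (i+1) \<notin> Aset S p"
  proof
    assume h: "rho S (i+1) \<in> Aset S p"
    then have le: "rho S (i+1) \<le> p" and m: "p - rho S (i+1) \<in> S" unfolding Aset_def by auto
    show False
    proof (cases "c \<ge> 1")
      case True
      have "p - rho S (i+1) = c - 1" unfolding p_def using True by linarith
      then show False using m conductor_minus1[OF ns] True unfolding c_def by simp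
    next
      case False
      then show False using le ri unfolding p_def by linarith
    qed
  qed
  have bnd: "j \<le> i" if "\<forall>l\<in>{1..j}. rho S l \<in> Aset S p" for j
  proof (rule ccontr)
    assume "\<not> j \<le> i"
    then have "i + 1 \<in> {1..j}" by simp
    then show False using that notA by blast
  qed
  have alpha: "alpha S p = i"
    unfolding alpha_def
    by (rule Greatest_equality) (use inA bnd assms(5) in auto)
  moreover have "beta S p = i \<and> card (Aset S p) = 2 * i" if ir: "i < r"
  proof
    have rr: "rho S i < rho S r" using rho_less_iff[OF ns, of i r] assms(5) ir by simp
    have ri1: "rho S (i+1) \<le> rho S r" using rho_le_iff[OF ns, of "i+1" r] assms(5) ir by simp
    have c1: "c \<ge> 1" using rr assms(4) unfolding c_def by linarith
    have "2 * rho S i \<le> p" using rr ri assms(4) unfolding p_def c_def by linarith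
    then show "beta S p = i"
      unfolding beta_def
      by (rule_tac Greatest_equality) (use inA bnd assms(5) in auto)
    have Aeq: "Aset S p = rho S ` {1..i} \<union> (\<lambda>l. p - rho S l) ` {1..i}"
    proof
      show "rho S ` {1..i} \<union> (\<lambda>l. p - rho S l) ` {1..i} \<subseteq> Aset S p"
      proof
        fix x assume "x \<in> rho S ` {1..i} \<union> (\<lambda>l. p - rho S l) ` {1..i}"
        then show "x \<in> Aset S p"
        proof
          assume "x \<in> rho S ` {1..i}" then show ?thesis using inA by auto
        next
          assume "x \<in> (\<lambda>l. p - rho S l) ` {1..i}"
          then obtain l where l: "l \<in> {1..i}" "x = p - rho S l" by auto
          then have "rho S l \<in> Aset S p" using inA by auto
          then show ?thesis unfolding Aset_def using l by auto
        qed
      qed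
    next
      show "Aset S p \<subseteq> rho S ` {1..i} \<union> (\<lambda>l. p - rho S l) ` {1..i}"
      proof
        fix q assume q: "q \<in> Aset S p"
        then have qS: "q \<in> S" and qp: "q \<le> p" and pq: "p - q \<in> S" unfolding Aset_def by auto
        obtain a where a: "a \<ge> 1" "rho S a = q" using rho_surj[OF ns qS] by auto
        obtain b where b: "b \<ge> 1" "rho S b = p - q" using rho_surj[OF ns pq] by auto
        show "q \<in> rho S ` {1..i} \<union> (\<lambda>l. p - rho S l) ` {1..i}"
        proof (cases "a \<le> i")
          case True then show ?thesis using a by auto
        next
          case na: False
          show ?thesis
          proof (cases "b \<le> i")
            case True
            have "q = p - rho S b" using b qp by simp
            moreover have "b \<in> {1..i}" using True b by auto
            ultimately show ?thesis by blast
          next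
            case False
            have sum: "rho S a + rho S b - rho S (i+1) = c - 1"
              using a b qp unfolding p_def by simp
            have "rho S a + rho S b - rho S (i+1) \<in> S"
            proof (cases "b \<le> a")
              case True
              then show ?thesis using assms(2) False unfolding arf_def by auto
            next
              case f2: False
              then have "rho S b + rho S a - rho S (i+1) \<in> S" using assms(2) na unfolding arf_def by auto
              then show ?thesis by (simp add: add.commute)
            qed
            then show ?thesis using sum conductor_minus1[OF ns] c1 unfolding c_def by simp
          qed
        qed
      qed
    qed
    have inj1: "inj_on (rho S) {1..i}"
      by (rule inj_onI) (metis atLeastAtMost_iff nat_less_le rho_less_iff[OF ns] linorder_neqE_nat)
    have inj2: "inj_on (\<lambda>l. p - rho S l) {1..i}"
    proof (rule inj_onI)
      fix x y assume x: "x \<in> {1..i}" and y: "y \<in> {1..i}" and e: "p - rho S x = p - rho S y"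
      have "rho S x \<le> p" "rho S y \<le> p" using inA x y unfolding Aset_def by auto
      then have "rho S x = rho S y" using e by linarith
      then show "x = y" using inj1 x y by (simp add: inj_on_eq_iff)
    qed
    have disj: "rho S ` {1..i} \<inter> (\<lambda>l. p - rho S l) ` {1..i} = {}"
    proof -
      have "rho S l < c" if "l \<in> {1..i}" for l
        using rho_less_iff[OF ns, of l r] that ir assms(4) unfolding c_def by auto
      moreover have "p - rho S l \<ge> c" if "l \<in> {1..i}" for l
        using rho_less_iff[OF ns, of l "i+1"] that unfolding p_def by auto
      ultimately show ?thesis by fastforce
    qed
    show "card (Aset S p) = 2 * i"
      unfolding Aeq
      by (subst card_Un_disjoint) (use disj card_image[OF inj1] card_image[OF inj2] in auto)
  qed
  ultimately show ?thesis unfolding p_def c_def by blast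
qed

end
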